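(* Let $Q$ be a connected quandle, $S$ a set, $\theta:Q\times Q\to\mathrm{Sym}_S$ a quandle cocycle, $E=Q\times_\theta S$ and $p:E\to Q$, $(x,a)\mapsto x$. The following are equivalent: (i) $\theta$ is cohomologous to the trivial cocycle; (ii) whenever $(x,a),(x,b)\in E$ lie in the same orbit of $\mathrm{LMlt}(E)$, then $a=b$ (i.e. $\ker p\wedge\mathcal{O}_{\mathrm{LMlt}(E)}=0_E$); (iii) for every $u\in E$, the restriction of $p$ to the orbit $u^{\mathrm{LMlt}(E)}$ is a quandle isomorphism $u^{\mathrm{LMlt}(E)}\to Q$.
   Context: A quandle is a set $Q$ with a binary operation $*$ such that every left translation $L_x:y\mapsto x*y$ is bijective, $x*(y*z)=(x*y)*(x*z)$ and $x*x=x$. $\mathrm{LMlt}(Q)=\langle L_x:x\in Q\rangle$; $Q$ is connected if $\mathrm{LMlt}(Q)$ is transitive. A quandle cocycle with values in $\mathrm{Sym}_S$ is $\theta:Q\times Q\to\mathrm{Sym}_S$ with $\theta_{x*y,x*z}\theta_{x,z}=\theta_{x,y*z}\theta_{y,z}$ and $\theta_{x,x}=1$; $\theta$ is cohomologous to the trivial cocycle $\mathbf{1}$ (constantly the identity) if there is $\gamma:Q\to\mathrm{Sym}_S$ with $\theta_{x,y}=\gamma_{x*y}\gamma_y^{-1}$ for all $x,y$. $Q\times_\theta S$ is the quandle on $Q\times S$ with $(x,a)*(y,b)=(x*y,\theta_{x,y}(b))$. Orbits of $\mathrm{LMlt}(E)$ are subquandles of $E$. *)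

theory Defs
  imports Main
begin

definition quandle :: "'q set \<Rightarrow> ('q \<Rightarrow> 'q \<Rightarrow> 'q) \<Rightarrow> bool" where
  "quandle Q op \<longleftrightarrow>
     (\<forall>x\<in>Q. \<forall>y\<in>Q. op x y \<in> Q) \<and>
     (\<forall>x\<in>Q. bij_betw (op x) Q Q) \<and>
     (\<forall>x\<in>Q. \<forall>y\<in>Q. \<forall>z\<in>Q. op x (op y z) = op (op x y) (op x z)) \<and>
     (\<forall>x\<in>Q. op x x = x)"

text \<open>The orbit of u under LMlt(Q) = the group generated by the left translations
  L_x (restricted to Q): closure of u under all L_z and all L_z inverse.\<close>
inductive_set lmlt_orbit :: "'q set \<Rightarrow> ('q \<Rightarrow> 'q \<Rightarrow> 'q) \<Rightarrow> 'q \<Rightarrow> 'q set"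
  for Q op u where
  base: "u \<in> Q \<Longrightarrow> u \<in> lmlt_orbit Q op u"
| fwd: "y \<in> lmlt_orbit Q op u \<Longrightarrow> z \<in> Q \<Longrightarrow> op z y \<in> lmlt_orbit Q op u"
| bwd: "y \<in> lmlt_orbit Q op u \<Longrightarrow> z \<in> Q \<Longrightarrow> w \<in> Q \<Longrightarrow> op z w = y
          \<Longrightarrow> w \<in> lmlt_orbit Q op u"

definition connected_quandle :: "'q set \<Rightarrow> ('q \<Rightarrow> 'q \<Rightarrow> 'q) \<Rightarrow> bool" where
  "connected_quandle Q op \<longleftrightarrow> quandle Q op \<and> (\<forall>x\<in>Q. \<forall>y\<in>Q. y \<in> lmlt_orbit Q op x)"

definition quandle_cocycle ::
  "'q set \<Rightarrow> ('q \<Rightarrow> 'q \<Rightarrow> 'q) \<Rightarrow> 's set \<Rightarrow> ('q \<Rightarrow> 'q \<Rightarrow> 's \<Rightarrow> 's) \<Rightarrow> bool" where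
  "quandle_cocycle Q op S \<theta> \<longleftrightarrow>
     (\<forall>x\<in>Q. \<forall>y\<in>Q. bij_betw (\<theta> x y) S S) \<and>
     (\<forall>x\<in>Q. \<forall>y\<in>Q. \<forall>z\<in>Q. \<forall>a\<in>S.
        \<theta> (op x y) (op x z) (\<theta> x z a) = \<theta> x (op y z) (\<theta> y z a)) \<and>
     (\<forall>x\<in>Q. \<forall>a\<in>S. \<theta> x x a = a)"

definition cohomologous_to_trivial ::
  "'q set \<Rightarrow> ('q \<Rightarrow> 'q \<Rightarrow> 'q) \<Rightarrow> 's set \<Rightarrow> ('q \<Rightarrow> 'q \<Rightarrow> 's \<Rightarrow> 's) \<Rightarrow> bool" where
  "cohomologous_to_trivial Q op S \<theta> \<longleftrightarrow>
     (\<exists>\<gamma>. (\<forall>x\<in>Q. bij_betw (\<gamma> x) S S) \<and>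
          (\<forall>x\<in>Q. \<forall>y\<in>Q. \<forall>a\<in>S. \<theta> x y a = \<gamma> (op x y) (the_inv_into S (\<gamma> y) a)))"

definition ext_op :: "('q \<Rightarrow> 'q \<Rightarrow> 'q) \<Rightarrow> ('q \<Rightarrow> 'q \<Rightarrow> 's \<Rightarrow> 's)
    \<Rightarrow> ('q \<times> 's) \<Rightarrow> ('q \<times> 's) \<Rightarrow> ('q \<times> 's)" where
  "ext_op op \<theta> u v = (op (fst u) (fst v), \<theta> (fst u) (fst v) (snd v))"

definition quandle_iso :: "'a set \<Rightarrow> ('a \<Rightarrow> 'a \<Rightarrow> 'a) \<Rightarrow> 'b set \<Rightarrow> ('b \<Rightarrow> 'b \<Rightarrow> 'b)
    \<Rightarrow> ('a \<Rightarrow> 'b) \<Rightarrow> bool" where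
  "quandle_iso A opA B opB f \<longleftrightarrow> bij_betw f A B \<and>
     (\<forall>x\<in>A. \<forall>y\<in>A. f (opA x y) = opB (f x) (f y))"

end

theory Submission
  imports Defs
begin

lemma orb_closed:
  assumes "\<And>x y. x \<in> E \<Longrightarrow> y \<in> E \<Longrightarrow> f x y \<in> E" "v \<in> lmlt_orbit E f u"
  shows "v \<in> E"
  using assms(2) by induct (auto intro: assms(1))

lemma orb_trans:
  "w \<in> lmlt_orbit E f v \<Longrightarrow> v \<in> lmlt_orbit E f u \<Longrightarrow> w \<in> lmlt_orbit E f u"
proof (induct rule: lmlt_orbit.induct)
  case base then show ?case by simp
next
  case (fwd y z) then show ?case by (auto intro: lmlt_orbit.fwd)
next
  case (bwd y z w) then show ?case by (metis lmlt_orbit.bwd)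
qed

lemma orb_sym:
  assumes cl: "\<And>x y. x \<in> E \<Longrightarrow> y \<in> E \<Longrightarrow> f x y \<in> E" and "v \<in> lmlt_orbit E f u"
  shows "u \<in> lmlt_orbit E f v"
  using assms(2)
proof induct
  case base then show ?case by (rule lmlt_orbit.base)
next
  case (fwd y z)
  have yE: "y \<in> E" using orb_closed[OF cl fwd(1)] .
  have "y \<in> lmlt_orbit E f (f z y)"
    by (rule lmlt_orbit.bwd[where op=f and z=z, OF lmlt_orbit.base[OF cl[OF fwd(3) yE]] fwd(3) yE refl])
  then show ?case using fwd(2) orb_trans by metis
next
  case (bwd y z w)
  have "y \<in> lmlt_orbit E f w"
    using lmlt_orbit.fwd[where op=f, OF lmlt_orbit.base[OF bwd(4)] bwd(3)] bwd(5) by simp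
  then show ?case using bwd(2) orb_trans by metis
qed

theorem proposition2p3:
  fixes Q :: "'q set" and op :: "'q \<Rightarrow> 'q \<Rightarrow> 'q"
    and S :: "'s set" and \<theta> :: "'q \<Rightarrow> 'q \<Rightarrow> 's \<Rightarrow> 's"
  assumes "connected_quandle Q op"
    and "quandle_cocycle Q op S \<theta>"
  shows "(cohomologous_to_trivial Q op S \<theta>
           \<longleftrightarrow> (\<forall>x\<in>Q. \<forall>a\<in>S. \<forall>b\<in>S.
                  (x, b) \<in> lmlt_orbit (Q \<times> S) (ext_op op \<theta>) (x, a) \<longrightarrow> a = b))
       \<and> ((\<forall>x\<in>Q. \<forall>a\<in>S. \<forall>b\<in>S.
                  (x, b) \<in> lmlt_orbit (Q \<times> S) (ext_op op \<theta>) (x, a) \<longrightarrow> a = b)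
           \<longleftrightarrow> (\<forall>u\<in>Q \<times> S.
                  quandle_iso (lmlt_orbit (Q \<times> S) (ext_op op \<theta>) u) (ext_op op \<theta>) Q op fst))"
proof -
  from assms have qQ: "quandle Q op" and conn: "\<forall>x\<in>Q. \<forall>y\<in>Q. y \<in> lmlt_orbit Q op x"
    unfolding connected_quandle_def by auto
  have opQ: "\<And>x y. x\<in>Q \<Longrightarrow> y\<in>Q \<Longrightarrow> op x y \<in> Q" using qQ unfolding quandle_def by auto
  have thbij: "\<And>x y. x\<in>Q \<Longrightarrow> y\<in>Q \<Longrightarrow> bij_betw (\<theta> x y) S S"
    using assms(2) unfolding quandle_cocycle_def by auto
  have thS: "\<And>x y a. x\<in>Q \<Longrightarrow> y\<in>Q \<Longrightarrow> a\<in>S \<Longrightarrow> \<theta> x y a \<in> S"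
    using thbij bij_betw_apply by metis
  define E where "E = Q \<times> S"
  define F where "F = ext_op op \<theta>"
  have Fcl: "\<And>u v. u\<in>E \<Longrightarrow> v\<in>E \<Longrightarrow> F u v \<in> E"
    by (auto simp: E_def F_def ext_op_def opQ thS)
  have Fst: "fst (F u v) = op (fst u) (fst v)" for u v by (simp add: F_def ext_op_def)
  have Fpair: "F (x,a) (y,b) = (op x y, \<theta> x y b)" for x a y b by (simp add: F_def ext_op_def)
  have lift: "\<exists>b\<in>S. (y,b) \<in> lmlt_orbit E F (x0,a)"
    if x0: "x0\<in>Q" and a: "a\<in>S" and y: "y \<in> lmlt_orbit Q op x0" for x0 a y
    using y
  proof induct
    case base show ?case using x0 a by (auto simp: E_def intro: lmlt_orbit.base)
  next
    case (fwd y z)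
    then obtain b where b: "b\<in>S" "(y,b) \<in> lmlt_orbit E F (x0,a)" by blast
    have yQ: "y \<in> Q" using orb_closed[OF opQ fwd(1)] .
    have "F (z,a) (y,b) \<in> lmlt_orbit E F (x0,a)"
      by (rule lmlt_orbit.fwd[OF b(2)]) (auto simp: E_def fwd a)
    then show ?case using thS[OF fwd(3) yQ b(1)] by (auto simp: Fpair)
  next
    case (bwd y z w)
    then obtain b where b: "b\<in>S" "(y,b) \<in> lmlt_orbit E F (x0,a)" by blast
    define b' where "b' = the_inv_into S (\<theta> z w) b"
    have bi: "bij_betw (\<theta> z w) S S" using thbij bwd by auto
    have b'S: "b' \<in> S" unfolding b'_def
      by (metis b(1) bi bij_betw_def the_inv_into_into order_refl)
    have tb: "\<theta> z w b' = b" unfolding b'_def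
      by (metis b(1) bi bij_betw_def f_the_inv_into_f)
    have "(w,b') \<in> lmlt_orbit E F (x0,a)"
    proof (rule lmlt_orbit.bwd[where z="(z,a)" and y="(y,b)", OF b(2)])
      show "(z,a) \<in> E" using bwd(3) a by (simp add: E_def)
      show "(w,b') \<in> E" using bwd(4) b'S by (simp add: E_def)
      show "F (z,a) (w,b') = (y,b)" using bwd(5) tb by (simp add: Fpair)
    qed
    then show ?case using b'S by blast
  qed
  define II where "II = (\<forall>x\<in>Q. \<forall>a\<in>S. \<forall>b\<in>S.
                  (x, b) \<in> lmlt_orbit E F (x, a) \<longrightarrow> a = b)"
  have inj_orb: "b = b'" if II: II and u: "u \<in> E" and h1: "(y,b) \<in> lmlt_orbit E F u"
    and h2: "(y,b') \<in> lmlt_orbit E F u" for u y b b'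
  proof -
    have yb: "(y,b) \<in> E" by (rule orb_closed[OF Fcl h1])
    have yb': "(y,b') \<in> E" by (rule orb_closed[OF Fcl h2])
    have "u \<in> lmlt_orbit E F (y,b)" using orb_sym[OF Fcl h1] .
    then have o: "(y,b') \<in> lmlt_orbit E F (y,b)" by (rule orb_trans[OF h2])
    have "y \<in> Q" "b \<in> S" "b' \<in> S" using yb yb' by (auto simp: E_def)
    with II o show ?thesis unfolding II_def by blast
  qed
  have P1: "cohomologous_to_trivial Q op S \<theta> \<longleftrightarrow> II"
  proof
    assume "cohomologous_to_trivial Q op S \<theta>"
    then obtain \<gamma> where gb: "\<forall>x\<in>Q. bij_betw (\<gamma> x) S S" and
      gf: "\<forall>x\<in>Q. \<forall>y\<in>Q. \<forall>a\<in>S. \<theta> x y a = \<gamma> (op x y) (the_inv_into S (\<gamma> y) a)"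
      unfolding cohomologous_to_trivial_def by blast
    define g where "g v = the_inv_into S (\<gamma> (fst v)) (snd v)" for v
    have gF: "g (F z y) = g y" if "z \<in> E" "y \<in> E" for z y
    proof -
      obtain z1 z2 y1 y2 where zz: "z = (z1,z2)" "y = (y1,y2)" by fastforce
      have q: "z1 \<in> Q" "y1 \<in> Q" "z2 \<in> S" "y2 \<in> S" using that zz E_def by auto
      define c where "c = the_inv_into S (\<gamma> y1) y2"
      have cS: "c \<in> S" unfolding c_def
        by (metis q gb bij_betw_def the_inv_into_into order_refl)
      have "g (F z y) = the_inv_into S (\<gamma> (op z1 y1)) (\<gamma> (op z1 y1) c)"
        using gf q by (simp add: g_def zz Fpair c_def)
      also have "\<dots> = c" using the_inv_into_f_f gb opQ q cS bij_betw_def by metis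
      finally show ?thesis by (simp add: g_def zz c_def)
    qed
    have ginv: "g v = g u" if "v \<in> lmlt_orbit E F u" for u v
      using that
    proof induct
      case base then show ?case by simp
    next
      case (fwd y z)
      have "g (F z y) = g y" by (rule gF[OF fwd(3) orb_closed[OF Fcl fwd(1)]])
      then show ?case using fwd(2) by simp
    next
      case (bwd y z w)
      have "g (F z w) = g w" by (rule gF[OF bwd(3) bwd(4)])
      then show ?case using bwd(2) bwd(5) by simp
    qed
    show II unfolding II_def
    proof (intro ballI impI)
      fix x a b assume x: "x \<in> Q" and a: "a \<in> S" and b: "b \<in> S"
        and h: "(x, b) \<in> lmlt_orbit E F (x, a)"
      have "g (x,b) = g (x,a)" using ginv[OF h] .
      then have "\<gamma> x (the_inv_into S (\<gamma> x) b) = \<gamma> x (the_inv_into S (\<gamma> x) a)"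
        by (simp add: g_def)
      then show "a = b" using f_the_inv_into_f gb x a b bij_betw_def by metis
    qed
  next
    assume II: II
    show "cohomologous_to_trivial Q op S \<theta>"
    proof (cases "Q = {}")
      case True then show ?thesis unfolding cohomologous_to_trivial_def by auto
    next
      case False
      then obtain x0 where x0: "x0 \<in> Q" by blast
      define \<gamma> where "\<gamma> y a = (THE b. b \<in> S \<and> (y,b) \<in> lmlt_orbit E F (x0,a))" for y a
      have x0a: "(x0,a) \<in> E" if "a \<in> S" for a using x0 that E_def by auto
      have uniq: "b = b'" if "a \<in> S" "(y,b) \<in> lmlt_orbit E F (x0,a)"
         "(y,b') \<in> lmlt_orbit E F (x0,a)" for a y b b'
        using inj_orb[OF II x0a[OF that(1)] that(2,3)] .
      have gam: "\<gamma> y a \<in> S \<and> (y, \<gamma> y a) \<in> lmlt_orbit E F (x0,a)" if yy: "y \<in> Q" and aa: "a \<in> S" for y a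
      proof -
        obtain b where bb: "b \<in> S" "(y,b) \<in> lmlt_orbit E F (x0,a)"
          using lift[OF x0 aa] conn x0 yy by blast
        show ?thesis unfolding \<gamma>_def
          by (rule theI[where P="\<lambda>b. b \<in> S \<and> (y,b) \<in> lmlt_orbit E F (x0,a)", OF conjI[OF bb]])
             (use uniq aa bb in blast)
      qed
      have gam_eq: "\<gamma> y a = b" if "y \<in> Q" "a \<in> S" "b \<in> S" "(y,b) \<in> lmlt_orbit E F (x0,a)"
        for y a b using gam[OF that(1,2)] uniq that by blast
      have gbij: "bij_betw (\<gamma> y) S S" if y: "y \<in> Q" for y
        unfolding bij_betw_def
      proof (intro conjI)
        show "inj_on (\<gamma> y) S"
        proof (rule inj_onI)
          fix a a' assume a: "a \<in> S" and a': "a' \<in> S" and e: "\<gamma> y a = \<gamma> y a'"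
          have h1: "(y, \<gamma> y a) \<in> lmlt_orbit E F (x0,a)" using gam y a by blast
          have h2: "(y, \<gamma> y a) \<in> lmlt_orbit E F (x0,a')" using gam y a' e by metis
          have "(x0,a') \<in> lmlt_orbit E F (y, \<gamma> y a)" using orb_sym[OF Fcl h2] .
          then have "(x0,a') \<in> lmlt_orbit E F (x0,a)" using h1 orb_trans by metis
          then show "a = a'" using II x0 a a' unfolding II_def by blast
        qed
        show "\<gamma> y ` S = S"
        proof
          show "\<gamma> y ` S \<subseteq> S" using gam y by blast
          show "S \<subseteq> \<gamma> y ` S"
          proof
            fix b assume b: "b \<in> S"
            obtain a where a: "a \<in> S" "(x0,a) \<in> lmlt_orbit E F (y,b)"
              using lift[OF y b] conn x0 y by blast
            have "(y,b) \<in> lmlt_orbit E F (x0,a)" using orb_sym[OF Fcl a(2)] .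
            then have "\<gamma> y a = b" using gam_eq y a b by blast
            then show "b \<in> \<gamma> y ` S" using a by blast
          qed
        qed
      qed
      show ?thesis unfolding cohomologous_to_trivial_def
      proof (intro exI conjI ballI)
        fix x assume "x \<in> Q" then show "bij_betw (\<gamma> x) S S" by (rule gbij)
      next
        fix x y a assume x: "x \<in> Q" and y: "y \<in> Q" and a: "a \<in> S"
        define c where "c = the_inv_into S (\<gamma> y) a"
        have cS: "c \<in> S" unfolding c_def
          by (metis a gbij[OF y] bij_betw_def the_inv_into_into order_refl)
        have gc: "\<gamma> y c = a" unfolding c_def
          by (metis a gbij[OF y] bij_betw_def f_the_inv_into_f)
        have "(y,a) \<in> lmlt_orbit E F (x0,c)" using gam[OF y cS] gc by simp
        then have "F (x,a) (y,a) \<in> lmlt_orbit E F (x0,c)"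
          by (rule lmlt_orbit.fwd) (auto simp: E_def x a)
        then have "(op x y, \<theta> x y a) \<in> lmlt_orbit E F (x0,c)" by (simp add: Fpair)
        then have "\<gamma> (op x y) c = \<theta> x y a" by (rule gam_eq[OF opQ[OF x y] cS thS[OF x y a]])
        then show "\<theta> x y a = \<gamma> (op x y) (the_inv_into S (\<gamma> y) a)" by (simp add: c_def)
      qed
    qed
  qed
  have P2: "II \<longleftrightarrow> (\<forall>u\<in>E. quandle_iso (lmlt_orbit E F u) F Q op fst)"
  proof
    assume II: II
    show "\<forall>u\<in>E. quandle_iso (lmlt_orbit E F u) F Q op fst"
    proof
      fix u assume u: "u \<in> E"
      obtain x0 a where ux: "u = (x0,a)" "x0 \<in> Q" "a \<in> S" using u E_def by auto
      have "inj_on fst (lmlt_orbit E F u)"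
      proof (rule inj_onI)
        fix v v' assume v: "v \<in> lmlt_orbit E F u" and v': "v' \<in> lmlt_orbit E F u"
          and e: "fst v = fst v'"
        obtain y b b' where "v = (y,b)" "v' = (y,b')" using e by (metis prod.collapse)
        then show "v = v'" using inj_orb[OF II u] v v' by blast
      qed
      moreover have "fst ` lmlt_orbit E F u = Q"
      proof
        show "fst ` lmlt_orbit E F u \<subseteq> Q"
        proof
          fix y assume "y \<in> fst ` lmlt_orbit E F u"
          then obtain v where v: "v \<in> lmlt_orbit E F u" "y = fst v" by blast
          have "v \<in> E" by (rule orb_closed[OF Fcl v(1)])
          then show "y \<in> Q" using v(2) by (auto simp: E_def)
        qed
        show "Q \<subseteq> fst ` lmlt_orbit E F u"
        proof
          fix y assume "y \<in> Q"
          then obtain b where "(y,b) \<in> lmlt_orbit E F u" using lift[OF ux(2,3)] conn ux by blast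
          then show "y \<in> fst ` lmlt_orbit E F u" by force
        qed
      qed
      ultimately show "quandle_iso (lmlt_orbit E F u) F Q op fst"
        unfolding quandle_iso_def bij_betw_def using Fst by blast
    qed
  next
    assume III: "\<forall>u\<in>E. quandle_iso (lmlt_orbit E F u) F Q op fst"
    show II unfolding II_def
    proof (intro ballI impI)
      fix x a b assume x: "x \<in> Q" and a: "a \<in> S" and b: "b \<in> S"
        and h: "(x, b) \<in> lmlt_orbit E F (x, a)"
      have "inj_on fst (lmlt_orbit E F (x,a))"
        using III x a E_def unfolding quandle_iso_def bij_betw_def by auto
      moreover have "(x,a) \<in> lmlt_orbit E F (x,a)" by (rule lmlt_orbit.base) (use x a in \<open>simp add: E_def\<close>)
      ultimately show "a = b" using h inj_onD by fastforce
    qed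
  qed
  show ?thesis using P1 P2 unfolding II_def E_def F_def by simp
qed

end
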